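(* Let $0<\mu<1$, $0\le\lambda<1$, and let $I_\theta$ be the function defined for $x\in(0,1)$ by $$I_\theta(x)=-x\log\left[\frac{\mu+\bar\mu\lambda}{1-2\bar x/(\sqrt\Delta+1)}\right]-\bar x\log\left[\frac{\bar\mu+\mu\lambda}{1-2x/(\sqrt\Delta+1)}\right],\qquad \Delta=1+\frac{4\lambda x\bar x}{\mu\bar\mu(1-\lambda)^2},$$ with $\bar\mu=1-\mu$, $\bar x=1-x$. Then for all $x\in(0,1)$, $$I_\theta(x)\ge 2\,\frac{1-\lambda}{1+\lambda}\,(x-\mu)^2.$$ Moreover, for $x\ne\mu$, the function $g(x)=I_\theta(x)/(x-\mu)^2$ attains its global minimum over $(0,1)\setminus\{\mu\}$ at $x=\bar\mu$ (when $\mu\neq1/2$). *)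

theory Defs
  imports Complex_Main
begin

definition Delta_theta :: "real \<Rightarrow> real \<Rightarrow> real \<Rightarrow> real" where
  "Delta_theta mu lam x = 1 + 4 * lam * x * (1 - x) / (mu * (1 - mu) * (1 - lam)^2)"

definition I_theta :: "real \<Rightarrow> real \<Rightarrow> real \<Rightarrow> real" where
  "I_theta mu lam x =
     - x * ln ((mu + (1 - mu) * lam) / (1 - 2 * (1 - x) / (sqrt (Delta_theta mu lam x) + 1)))
     - (1 - x) * ln (((1 - mu) + mu * lam) / (1 - 2 * x / (sqrt (Delta_theta mu lam x) + 1)))"

end

theory Submission
  imports Defs
begin


lemma alg1:
  fixes s x k d :: real
  assumes "s^2 = 1 + k*(x*(1-x))" "s \<ge> 1" "0 < x" "x < 1" "d = k*(1-2*x)/(2*s)"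
  shows "x*(d+2)/(s-1+2*x) + (1-x)*(d-2)/(s+1-2*x) - d/(s+1) = 0"
proof -
  have P: "s-1+2*x \<noteq> 0" "s+1-2*x \<noteq> 0" "s+1 \<noteq> 0" "s \<noteq> 0" using assms by auto
  have D: "d*(2*s) = k*(1-2*x)" using assms(5) P by simp
  have PQ: "s * s + x * 4 - (1 + x * (x * 4)) \<noteq> 0"
  proof -
    have "(s-1+2*x)*(s+1-2*x) \<noteq> 0" using P by simp
    then show ?thesis by (simp add: algebra_simps)
  qed
  show ?thesis using P PQ assms(1) D by (simp add: field_simps) algebra
qed
lemma alg2:
  fixes s x k d :: real
  assumes "s^2 = 1 + k*(x*(1-x))" "s \<ge> 1" "0 < x" "x < 1" "d = k*(1-2*x)/(2*s)"
  shows "(d+2)/(s-1+2*x) - (d-2)/(s+1-2*x) = 1/(s*(x*(1-x)))"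
proof -
  have P: "s-1+2*x \<noteq> 0" "s+1-2*x \<noteq> 0" "s+1 \<noteq> 0" "s \<noteq> 0" "x \<noteq> 0" "1 - x \<noteq> 0" using assms by auto
  have D: "d*(2*s) = k*(1-2*x)" using assms(5) P by simp
  show ?thesis using P assms(1) D by (simp add: field_simps) algebra
qed

context
  fixes mu lam :: real
  assumes mu0: "0 < mu" and mu1: "mu < 1" and lam0: "0 \<le> lam" and lam1: "lam < 1"
begin

definition "kk = 4*lam/(mu*(1-mu)*(1-lam)^2)"
definition "AA = mu + (1-mu)*lam"
definition "BB = (1-mu) + mu*lam"
definition "SS x = sqrt (1 + kk*(x*(1-x)))"
definition "I2 x = x*ln (SS x - 1 + 2*x) + (1-x)*ln (SS x + 1 - 2*x) - ln (SS x + 1) - x*ln AA - (1-x)*ln BB"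
definition "TT x = ln (SS x - 1 + 2*x) - ln (SS x + 1 - 2*x) + ln BB - ln AA"
definition "RR x = 1/(SS x * (x*(1-x)))"

lemma kk_nonneg: "kk \<ge> 0"
  unfolding kk_def using mu0 mu1 lam0 lam1 by (intro divide_nonneg_pos) auto

lemma AA_pos: "AA > 0" unfolding AA_def using mu0 mu1 lam0 lam1 by (simp add: add_pos_nonneg)
lemma BB_pos: "BB > 0" unfolding BB_def using mu0 mu1 lam0 lam1 by (simp add: add_pos_nonneg)

lemma rad_pos: assumes "0 \<le> x" "x \<le> 1" shows "1 + kk*(x*(1-x)) \<ge> 1"
  using kk_nonneg assms by simp

lemma SS_ge1: assumes "0 \<le> x" "x \<le> 1" shows "SS x \<ge> 1"
  unfolding SS_def using rad_pos[OF assms] by simp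

lemma SS_sq: assumes "0 \<le> x" "x \<le> 1" shows "(SS x)^2 = 1 + kk*(x*(1-x))"
  unfolding SS_def using rad_pos[OF assms] by simp

lemma I_eq: assumes "0 < x" "x < 1" shows "I_theta mu lam x = I2 x"
proof -
  have D: "Delta_theta mu lam x = 1 + kk*(x*(1-x))"
    unfolding Delta_theta_def kk_def using mu0 mu1 lam1 by (simp add: field_simps)
  have sD: "sqrt (Delta_theta mu lam x) = SS x" using D SS_def by simp
  define s where "s = SS x"
  have s1: "s \<ge> 1" using SS_ge1 assms s_def by simp
  have e1: "1 - 2*(1-x)/(s+1) = (s - 1 + 2*x)/(s+1)" using s1 by (simp add: field_simps)
  have e2: "1 - 2*x/(s+1) = (s + 1 - 2*x)/(s+1)" using s1 by (simp add: field_simps)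
  have P: "s - 1 + 2*x > 0" using s1 assms by simp
  have Q: "s + 1 - 2*x > 0" using s1 assms by simp
  have l1: "ln (AA / ((s - 1 + 2*x)/(s+1))) = ln AA - ln (s - 1 + 2*x) + ln (s+1)"
    using P s1 AA_pos by (simp add: ln_div ln_mult)
  have l2: "ln (BB / ((s + 1 - 2*x)/(s+1))) = ln BB - ln (s + 1 - 2*x) + ln (s+1)"
    using Q s1 BB_pos by (simp add: ln_div ln_mult)
  have "I_theta mu lam x = -x*ln(AA/((s-1+2*x)/(s+1))) - (1-x)*ln(BB/((s+1-2*x)/(s+1)))"
    unfolding I_theta_def sD AA_def BB_def s_def[symmetric] e1 e2 by simp
  also have "\<dots> = I2 x" unfolding l1 l2 I2_def s_def[symmetric] by (simp add: algebra_simps)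
  finally show ?thesis .
qed

lemma DERIV_SS: assumes "0 < x" "x < 1"
  shows "(SS has_real_derivative kk*(1-2*x)/(2*SS x)) (at x)"
proof -
  have pos: "1 + kk*(x*(1-x)) > 0" using rad_pos[of x] assms by simp
  show ?thesis unfolding SS_def[abs_def]
    using pos by (auto intro!: derivative_eq_intros simp: field_simps)
qed

lemma DERIV_SS_eq: "0 < x \<Longrightarrow> x < 1 \<Longrightarrow> D = kk*(1-2*x)/(2*SS x) \<Longrightarrow> (SS has_real_derivative D) (at x)"
  using DERIV_SS by simp

lemma DERIV_I2: assumes "0 < x" "x < 1" shows "(I2 has_real_derivative TT x) (at x)"
proof -
  define d where "d = kk*(1-2*x)/(2*SS x)"
  have s1: "SS x \<ge> 1" using SS_ge1 assms by simp
  have P: "SS x - 1 + 2*x > 0" "SS x + 1 - 2*x > 0" "SS x + 1 > 0" using s1 assms by auto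
  have dS: "(SS has_real_derivative d) (at x)" using DERIV_SS assms d_def by simp
  have dP: "((\<lambda>x. SS x - 1 + 2*x) has_real_derivative d + 2) (at x)"
    using dS by (auto intro!: derivative_eq_intros)
  have dQ: "((\<lambda>x. SS x + 1 - 2*x) has_real_derivative d - 2) (at x)"
    using dS by (auto intro!: derivative_eq_intros)
  have dR: "((\<lambda>x. SS x + 1) has_real_derivative d) (at x)"
    using dS by (auto intro!: derivative_eq_intros)
  have lP: "((\<lambda>x. ln (SS x - 1 + 2*x)) has_real_derivative (d+2)/(SS x - 1 + 2*x)) (at x)"
    using DERIV_chain2[OF DERIV_ln_divide[OF P(1)] dP] by simp
  have lQ: "((\<lambda>x. ln (SS x + 1 - 2*x)) has_real_derivative (d-2)/(SS x + 1 - 2*x)) (at x)"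
    using DERIV_chain2[OF DERIV_ln_divide[OF P(2)] dQ] by simp
  have lR: "((\<lambda>x. ln (SS x + 1)) has_real_derivative d/(SS x + 1)) (at x)"
    using DERIV_chain2[OF DERIV_ln_divide[OF P(3)] dR] by simp
  have dlin: "((\<lambda>x. 1 - x) has_real_derivative -1) (at x)" by (auto intro!: derivative_eq_intros)
  note t1 = DERIV_mult'[OF DERIV_ident lP]
  note t2 = DERIV_mult'[OF dlin lQ]
  note t3 = DERIV_mult'[OF DERIV_ident DERIV_const[of "ln AA"]]
  note t4 = DERIV_mult'[OF dlin DERIV_const[of "ln BB"]]
  note all0 = DERIV_diff[OF DERIV_diff[OF DERIV_diff[OF DERIV_add[OF t1 t2] lR] t3] t4]
  have all: "(I2 has_real_derivative
     (ln (SS x - 1 + 2*x) + x*((d+2)/(SS x - 1 + 2*x))) + (- ln (SS x + 1 - 2*x) + (1-x)*((d-2)/(SS x + 1 - 2*x)))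
      - d/(SS x + 1) - ln AA + ln BB) (at x)"
    unfolding I2_def[abs_def] by (rule DERIV_cong[OF all0]) (simp add: algebra_simps)
  have z: "x*(d+2)/(SS x - 1 + 2*x) + (1-x)*(d-2)/(SS x + 1 - 2*x) - d/(SS x + 1) = 0"
    using alg1[OF SS_sq s1 assms d_def] assms by simp
  have "(ln (SS x - 1 + 2*x) + x*((d+2)/(SS x - 1 + 2*x))) + (- ln (SS x + 1 - 2*x) + (1-x)*((d-2)/(SS x + 1 - 2*x)))
      - d/(SS x + 1) - ln AA + ln BB = TT x + (x*(d+2)/(SS x - 1 + 2*x) + (1-x)*(d-2)/(SS x + 1 - 2*x) - d/(SS x + 1))"
    unfolding TT_def by (simp add: algebra_simps)
  with all z show ?thesis by simp
qed

lemma DERIV_TT: assumes "0 < x" "x < 1" shows "(TT has_real_derivative RR x) (at x)"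
proof -
  define d where "d = kk*(1-2*x)/(2*SS x)"
  have s1: "SS x \<ge> 1" using SS_ge1 assms by simp
  have P: "SS x - 1 + 2*x > 0" "SS x + 1 - 2*x > 0" "SS x + 1 > 0" using s1 assms by auto
  have dS: "(SS has_real_derivative d) (at x)" using DERIV_SS assms d_def by simp
  have dP: "((\<lambda>x. SS x - 1 + 2*x) has_real_derivative d + 2) (at x)"
    using dS by (auto intro!: derivative_eq_intros)
  have dQ: "((\<lambda>x. SS x + 1 - 2*x) has_real_derivative d - 2) (at x)"
    using dS by (auto intro!: derivative_eq_intros)
  have lP: "((\<lambda>x. ln (SS x - 1 + 2*x)) has_real_derivative (d+2)/(SS x - 1 + 2*x)) (at x)"
    using DERIV_chain2[OF DERIV_ln_divide[OF P(1)] dP] by simp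
  have lQ: "((\<lambda>x. ln (SS x + 1 - 2*x)) has_real_derivative (d-2)/(SS x + 1 - 2*x)) (at x)"
    using DERIV_chain2[OF DERIV_ln_divide[OF P(2)] dQ] by simp
  have all: "(TT has_real_derivative (d+2)/(SS x - 1 + 2*x) - (d-2)/(SS x + 1 - 2*x)) (at x)"
    unfolding TT_def[abs_def]
    using dS P by (auto intro!: derivative_eq_intros simp: field_simps)
  then show ?thesis using alg2[OF SS_sq s1 assms d_def] assms unfolding RR_def by simp
qed

lemma kk_mu: "kk*(mu*(1-mu)) = 4*lam/(1-lam)^2"
  unfolding kk_def using mu0 mu1 lam1 by (simp add: field_simps)

lemma SS_mu: "SS mu = (1+lam)/(1-lam)" "SS (1-mu) = (1+lam)/(1-lam)"
proof -
  have nz: "(1-lam)^2 \<noteq> 0" using lam1 by simp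
  have "((1+lam)/(1-lam))^2 = (1+lam)^2/(1-lam)^2" by (simp add: power_divide)
  also have "\<dots> = ((1-lam)^2 + 4*lam)/(1-lam)^2" by (simp add: power2_eq_square algebra_simps)
  also have "\<dots> = 1 + 4*lam/(1-lam)^2" using nz by (simp add: add_divide_distrib)
  finally have e: "1 + kk*(mu*(1-mu)) = ((1+lam)/(1-lam))^2" unfolding kk_mu by simp
  have p: "(1+lam)/(1-lam) > 0" using lam0 lam1 by simp
  show "SS mu = (1+lam)/(1-lam)" unfolding SS_def e using p lam0 lam1 by simp
  have "(1-mu)*(1-(1-mu)) = mu*(1-mu)" by simp
  then show "SS (1-mu) = (1+lam)/(1-lam)" unfolding SS_def using e p lam0 lam1 by (simp only:) simp
qed

lemma vals:
  "I2 mu = 0" "TT mu = 0"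
  "I2 (1-mu) = (1-2*mu)*(ln BB - ln AA)" "TT (1-mu) = 2*(ln BB - ln AA)"
proof -
  define c where "c = 2/(1-lam)"
  have c0: "c > 0" using lam1 c_def by simp
  have e1: "SS mu - 1 + 2*mu = AA*c" unfolding SS_mu c_def AA_def using lam1 by (simp add: field_simps)
  have e2: "SS mu + 1 - 2*mu = BB*c" unfolding SS_mu c_def BB_def using lam1 by (simp add: field_simps)
  have e3: "SS mu + 1 = c" unfolding SS_mu c_def using lam1 by (simp add: field_simps)
  have f1: "SS (1-mu) - 1 + 2*(1-mu) = BB*c" unfolding SS_mu c_def BB_def using lam1 by (simp add: field_simps)
  have f2: "SS (1-mu) + 1 - 2*(1-mu) = AA*c" unfolding SS_mu c_def AA_def using lam1 by (simp add: field_simps)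
  have f3: "SS (1-mu) + 1 = c" unfolding SS_mu c_def using lam1 by (simp add: field_simps)
  have lA: "ln (AA*c) = ln AA + ln c" using AA_pos c0 by (simp add: ln_mult)
  have lB: "ln (BB*c) = ln BB + ln c" using BB_pos c0 by (simp add: ln_mult)
  show "I2 mu = 0" unfolding I2_def e1 e2 unfolding e3 lA lB by (simp add: algebra_simps)
  show "TT mu = 0" unfolding TT_def e1 e2 lA lB by (simp add: algebra_simps)
  show "I2 (1-mu) = (1-2*mu)*(ln BB - ln AA)" unfolding I2_def f1 f2 unfolding f3 lA lB by (simp add: algebra_simps)
  show "TT (1-mu) = 2*(ln BB - ln AA)" unfolding TT_def f1 f2 lA lB by (simp add: algebra_simps)
qed

lemma RR_mono:
  assumes "0 < p" "p < 1" "0 < q" "q < 1" "p*(1-p) \<le> q*(1-q)"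
  shows "RR q \<le> RR p"
proof -
  have yp: "p*(1-p) > 0" using assms by simp
  have "1 + kk*(p*(1-p)) \<le> 1 + kk*(q*(1-q))" using kk_nonneg assms(5) by (simp add: mult_left_mono)
  then have S: "SS p \<le> SS q" unfolding SS_def by simp
  have "SS p * (p*(1-p)) \<le> SS q * (q*(1-q))"
    by (rule mult_mono) (use S assms(5) yp SS_ge1[of q] assms in auto)
  moreover have "SS p * (p*(1-p)) > 0" using SS_ge1[of p] assms yp by simp
  ultimately show ?thesis unfolding RR_def by (intro divide_left_mono) auto
qed

lemma RR_smono:
  assumes "0 < p" "p < 1" "0 < q" "q < 1" "p*(1-p) < q*(1-q)"
  shows "RR q < RR p"
proof -
  have yp: "p*(1-p) > 0" using assms by simp
  have "1 + kk*(p*(1-p)) \<le> 1 + kk*(q*(1-q))" using kk_nonneg assms(5) by (simp add: mult_left_mono)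
  then have S: "SS p \<le> SS q" unfolding SS_def by simp
  have "SS p * (p*(1-p)) < SS q * (q*(1-q))"
    by (rule mult_le_less_imp_less) (use S assms(5) yp SS_ge1[of p] assms in auto)
  moreover have "SS p * (p*(1-p)) > 0" using SS_ge1[of p] assms yp by simp
  ultimately show ?thesis unfolding RR_def by (intro divide_strict_left_mono) auto
qed

end


lemma mvt01:
  fixes f f' :: "real \<Rightarrow> real"
  assumes "u < v" "0 < u" "v < 1" "\<And>t. 0 < t \<Longrightarrow> t < 1 \<Longrightarrow> (f has_real_derivative f' t) (at t)"
  shows "\<exists>z. u < z \<and> z < v \<and> f v - f u = (v - u) * f' z"
  using assms by (intro MVT2) auto

lemma sgn_pos: "(0::real) < c \<Longrightarrow> 0 < c*y \<Longrightarrow> 0 < y" using zero_less_mult_pos by blast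
lemma sgn_neg: "(0::real) < c \<Longrightarrow> c*y < 0 \<Longrightarrow> y < 0" by (metis mult_pos_pos not_less_iff_gr_or_eq mult_zero_right)

lemma key:
  fixes h h1 h2 :: "real \<Rightarrow> real" and a b x :: real
  assumes ab: "0 < a" "a < b" "b < 1" "a + b = 1"
    and d1: "\<And>t. 0 < t \<Longrightarrow> t < 1 \<Longrightarrow> (h has_real_derivative h1 t) (at t)"
    and d2: "\<And>t. 0 < t \<Longrightarrow> t < 1 \<Longrightarrow> (h1 has_real_derivative h2 t) (at t)"
    and z: "h a = 0" "h b = 0" "h1 a = 0" "h1 b = 0"
    and mono: "\<And>p q. 0 < p \<Longrightarrow> p < 1 \<Longrightarrow> 0 < q \<Longrightarrow> q < 1 \<Longrightarrow> p*(1-p) \<le> q*(1-q) \<Longrightarrow> h2 q \<le> h2 p"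
    and smono: "\<And>p q. 0 < p \<Longrightarrow> p < 1 \<Longrightarrow> 0 < q \<Longrightarrow> q < 1 \<Longrightarrow> p*(1-p) < q*(1-q) \<Longrightarrow> h2 q < h2 p"
    and x: "0 < x" "x < 1"
  shows "h x \<ge> 0"
proof (rule ccontr)
  assume neg: "\<not> h x \<ge> 0"
  hence hx: "h x < 0" by simp
  obtain \<xi> where xi: "a < \<xi>" "\<xi> < b" "h1 b - h1 a = (b - a) * h2 \<xi>"
    using mvt01[OF ab(2) ab(1) ab(3) d2] by blast
  have xi0: "h2 \<xi> = 0" using xi z ab by simp
  consider "x < a" | "x = a" | "a < x \<and> x < b" | "x = b" | "b < x" by linarith
  then show False
  proof cases
    case 1
    obtain e where e: "x < e" "e < a" "h a - h x = (a - x) * h1 e"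
      using mvt01[OF 1 x(1) _ d1] ab by auto
    have he: "h1 e > 0" using sgn_pos[of "a - x" "h1 e"] e hx z by auto
    obtain p where p: "e < p" "p < a" "h1 a - h1 e = (a - e) * h2 p"
      using mvt01[OF e(2) _ _ d2] e x ab by auto
    have hp: "h2 p < 0" using sgn_neg[of "a - e" "h2 p"] p he z by auto
    have "p*(1-p) < \<xi>*(1-\<xi>)"
    proof -
      have "\<xi>*(1-\<xi>) - p*(1-p) = (\<xi> - p)*(1 - \<xi> - p)" by (simp add: algebra_simps)
      moreover have "(\<xi> - p)*(1 - \<xi> - p) > 0" using p xi ab by (intro mult_pos_pos) auto
      ultimately show ?thesis by linarith
    qed
    then have "h2 \<xi> < h2 p" using smono p xi e x ab by auto
    then show False using hp xi0 by simp
  next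
    case 2 then show False using hx z by simp
  next
    case 4 then show False using hx z by simp
  next
    case 5
    obtain e where e: "b < e" "e < x" "h x - h b = (x - b) * h1 e"
      using mvt01[OF 5 _ x(2) d1] ab by auto
    have he: "h1 e < 0" using sgn_neg[of "x - b" "h1 e"] e hx z by auto
    obtain p where p: "b < p" "p < e" "h1 e - h1 b = (e - b) * h2 p"
      using mvt01[OF e(1) _ _ d2] e x ab by auto
    have hp: "h2 p < 0" using sgn_neg[of "e - b" "h2 p"] p he z by auto
    have "p*(1-p) < \<xi>*(1-\<xi>)"
    proof -
      have "\<xi>*(1-\<xi>) - p*(1-p) = (p - \<xi>)*(\<xi> + p - 1)" by (simp add: algebra_simps)
      moreover have "(p - \<xi>)*(\<xi> + p - 1) > 0" using p xi ab by (intro mult_pos_pos) auto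
      ultimately show ?thesis by linarith
    qed
    then have "h2 \<xi> < h2 p" using smono p xi e x ab by auto
    then show False using hp xi0 by simp
  next
    case 3
    obtain e1 where e1: "a < e1" "e1 < x" "h x - h a = (x - a) * h1 e1"
      using mvt01[of a x h h1] 3 ab d1 by auto
    obtain e2 where e2: "x < e2" "e2 < b" "h b - h x = (b - x) * h1 e2"
      using mvt01[of x b h h1] 3 ab d1 by auto
    have he1: "h1 e1 < 0" using sgn_neg[of "x - a" "h1 e1"] e1 hx z by auto
    have he2: "h1 e2 > 0" using sgn_pos[of "b - x" "h1 e2"] e2 hx z by auto
    obtain p1 where p1: "a < p1" "p1 < e1" "h1 e1 - h1 a = (e1 - a) * h2 p1"
      using mvt01[of a e1 h1 h2] e1 3 ab d2 by auto
    obtain p2 where p2: "e1 < p2" "p2 < e2" "h1 e2 - h1 e1 = (e2 - e1) * h2 p2"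
      using mvt01[of e1 e2 h1 h2] e1 e2 3 ab d2 by auto
    obtain p3 where p3: "e2 < p3" "p3 < b" "h1 b - h1 e2 = (b - e2) * h2 p3"
      using mvt01[of e2 b h1 h2] e2 3 ab d2 by auto
    have hp1: "h2 p1 < 0" using sgn_neg[of "e1 - a" "h2 p1"] p1 he1 z by auto
    have hp2: "h2 p2 > 0" using sgn_pos[of "e2 - e1" "h2 p2"] p2 he1 he2 by auto
    have hp3: "h2 p3 < 0" using sgn_neg[of "b - e2" "h2 p3"] p3 he2 z by auto
    have "p1*(1-p1) \<le> p2*(1-p2) \<or> p3*(1-p3) \<le> p2*(1-p2)"
    proof (cases "p1 + p2 \<le> 1")
      case True
      have "p2*(1-p2) - p1*(1-p1) = (p2 - p1)*(1 - p1 - p2)" by (simp add: algebra_simps)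
      moreover have "(p2 - p1)*(1 - p1 - p2) \<ge> 0" using True p1 p2 e1 by (intro mult_nonneg_nonneg) auto
      ultimately show ?thesis by linarith
    next
      case False
      have "p2*(1-p2) - p3*(1-p3) = (p3 - p2)*(p2 + p3 - 1)" by (simp add: algebra_simps)
      moreover have "(p3 - p2)*(p2 + p3 - 1) \<ge> 0" using False p1 p2 p3 e1 e2 by (intro mult_nonneg_nonneg) auto
      ultimately show ?thesis by linarith
    qed
    then have "h2 p2 \<le> h2 p1 \<or> h2 p2 \<le> h2 p3"
      using mono[of p1 p2] mono[of p3 p2] p1 p2 p3 e1 e2 3 ab by force
    then show False using hp1 hp2 hp3 by linarith
  qed
qed

lemma key2:
  fixes h hd hdd :: "real \<Rightarrow> real" and m x :: real
  assumes m: "0 < m" "m < 1"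
    and d1: "\<And>t. 0 < t \<Longrightarrow> t < 1 \<Longrightarrow> (h has_real_derivative hd t) (at t)"
    and d2: "\<And>t. 0 < t \<Longrightarrow> t < 1 \<Longrightarrow> (hd has_real_derivative hdd t) (at t)"
    and z: "h m = 0" "hd m = 0"
    and pos: "\<And>t. 0 < t \<Longrightarrow> t < 1 \<Longrightarrow> hdd t \<ge> 0"
    and x: "0 < x" "x < 1"
  shows "h x \<ge> 0"
proof (rule ccontr)
  assume "\<not> h x \<ge> 0"
  hence hx: "h x < 0" by simp
  consider "x < m" | "x = m" | "m < x" by linarith
  then show False
  proof cases
    case 1
    obtain e where e: "x < e" "e < m" "h m - h x = (m - x) * hd e"
      using mvt01[of x m h hd] 1 x m d1 by auto
    have he: "hd e > 0" using sgn_pos[of "m - x" "hd e"] e hx z by auto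
    obtain p where p: "e < p" "p < m" "hd m - hd e = (m - e) * hdd p"
      using mvt01[of e m hd hdd] e x m d2 by auto
    have hp: "hdd p < 0" using sgn_neg[of "m - e" "hdd p"] p he z by auto
    then show False using pos[of p] p e x m by auto
  next
    case 2 then show False using hx z by simp
  next
    case 3
    obtain e where e: "m < e" "e < x" "h x - h m = (x - m) * hd e"
      using mvt01[of m x h hd] 3 x m d1 by auto
    have he: "hd e < 0" using sgn_neg[of "x - m" "hd e"] e hx z by auto
    obtain p where p: "m < p" "p < e" "hd e - hd m = (e - m) * hdd p"
      using mvt01[of m e hd hdd] e x m d2 by auto
    have hp: "hdd p < 0" using sgn_neg[of "e - m" "hdd p"] p he z by auto
    then show False using pos[of p] p e x m by auto
  qed
qed

lemma ln_artanh:
  fixes z :: real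
  assumes "0 \<le> z" "z < 1"
  shows "ln (1+z) - ln (1-z) \<ge> 2*z"
proof (cases "z = 0")
  case True then show ?thesis by simp
next
  case False
  hence z0: "0 < z" using assms by simp
  define f where "f t = ln (1+t) - ln (1-t) - 2*t" for t :: real
  have d: "(f has_real_derivative (1/(1+t) + 1/(1-t) - 2)) (at t)" if "0 \<le> t" "t \<le> z" for t
  proof -
    have "1 + t > 0" "1 - t > 0" using that assms by auto
    moreover have "1 - t*t \<noteq> 0"
    proof -
      have "(1+t)*(1-t) > 0" using that assms by (intro mult_pos_pos) auto
      then show ?thesis by (simp add: algebra_simps)
    qed
    ultimately show ?thesis unfolding f_def[abs_def]
      by (auto intro!: derivative_eq_intros simp: field_simps)
  qed
  obtain \<xi> where xi: "0 < \<xi>" "\<xi> < z" "f z - f 0 = (z - 0) * (1/(1+\<xi>) + 1/(1-\<xi>) - 2)"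
    using MVT2[of 0 z f "\<lambda>t. 1/(1+t) + 1/(1-t) - 2"] z0 d by auto
  have "1/(1+\<xi>) + 1/(1-\<xi>) - 2 = 2*\<xi>^2/((1+\<xi>)*(1-\<xi>))"
  proof -
    have "(1+\<xi>)*(1-\<xi>) > 0" using xi assms by (intro mult_pos_pos) auto
    then have "1 - \<xi>*\<xi> \<noteq> 0" by (simp add: algebra_simps)
    then show ?thesis using xi assms by (simp add: field_simps power2_eq_square)
  qed
  moreover have "2*\<xi>^2/((1+\<xi>)*(1-\<xi>)) \<ge> 0" using xi assms by (intro divide_nonneg_pos) auto
  ultimately have "f z - f 0 \<ge> 0" using xi z0 by (simp only: diff_0_right) (rule mult_nonneg_nonneg, auto)
  then show ?thesis unfolding f_def by simp
qed


theorem mainTheorem4: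
  fixes mu lam :: real
  assumes "0 < mu" "mu < 1" "0 \<le> lam" "lam < 1"
  shows "(\<forall>x. 0 < x \<and> x < 1 \<longrightarrow>
            I_theta mu lam x \<ge> 2 * ((1 - lam) / (1 + lam)) * (x - mu)^2)
         \<and> (mu \<noteq> 1/2 \<longrightarrow>
            (\<forall>x. 0 < x \<and> x < 1 \<and> x \<noteq> mu \<longrightarrow>
               I_theta mu lam (1 - mu) / ((1 - mu) - mu)^2 \<le> I_theta mu lam x / (x - mu)^2))"
proof -
  define c where "c = (1 - lam) / (1 + lam)"
  define L where "L = ln (BB mu lam) - ln (AA mu lam)"
  note Ieq = I_eq[OF assms]
  have dh: "((\<lambda>x. I2 mu lam x - M*(x-mu)^2) has_real_derivative TT mu lam t - 2*M*(t-mu)) (at t)"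
    if "0 < t" "t < 1" for M t
    using DERIV_I2[OF assms that] by (auto intro!: derivative_eq_intros)
  have dh1: "((\<lambda>x. TT mu lam x - 2*M*(x-mu)) has_real_derivative RR mu lam t - 2*M) (at t)"
    if "0 < t" "t < 1" for M t
    using DERIV_TT[OF assms that] by (auto intro!: derivative_eq_intros)
  note V = vals[OF assms]
  show ?thesis
  proof (cases "mu = 1/2")
    case True
    have RRmu: "RR mu lam mu = 4*c"
    proof -
      have "RR mu lam mu = 1/(((1+lam)/(1-lam)) * (mu*(1-mu)))"
        unfolding RR_def[OF assms] using SS_mu[OF assms] by simp
      also have "\<dots> = 4*c" unfolding c_def True using assms by (simp add: field_simps)
      finally show ?thesis .
    qed
    have posA: "RR mu lam t - 2*(2*c) \<ge> 0" if "0 < t" "t < 1" for t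
    proof -
      have "t*(1-t) \<le> mu*(1-mu)" unfolding True using sum_squares_ge_zero[of "t - 1/2" 0]
        by (simp add: algebra_simps power2_eq_square)
      then have "RR mu lam mu \<le> RR mu lam t" using RR_mono[OF assms, of t mu] that assms by auto
      then show ?thesis using RRmu by simp
    qed
    have dA: "\<And>t. 0 < t \<Longrightarrow> t < 1 \<Longrightarrow> ((\<lambda>x. I2 mu lam x - (2*c)*(x-mu)^2) has_real_derivative TT mu lam t - 2*(2*c)*(t-mu)) (at t)"
      using dh by blast
    have dB: "\<And>t. 0 < t \<Longrightarrow> t < 1 \<Longrightarrow> ((\<lambda>x. TT mu lam x - 2*(2*c)*(x-mu)) has_real_derivative RR mu lam t - 2*(2*c)) (at t)"
      using dh1 by blast
    have zA: "I2 mu lam mu - (2*c)*(mu-mu)^2 = 0" "TT mu lam mu - 2*(2*c)*(mu-mu) = 0" using V by auto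
    have low: "I2 mu lam x - (2*c)*(x-mu)^2 \<ge> 0" if "0 < x" "x < 1" for x
      using key2[OF assms(1,2) dA dB zA posA that] by simp
    have A: "\<forall>x. 0 < x \<and> x < 1 \<longrightarrow> I_theta mu lam x \<ge> 2 * ((1 - lam) / (1 + lam)) * (x - mu)^2"
      using low Ieq unfolding c_def by auto
    show ?thesis using A True by blast
  next
    case False
    define K where "K = L / (1 - 2*mu)"
    have d0: "1 - 2*mu \<noteq> 0" using False by simp
    have KL: "K * (1 - 2*mu) = L" unfolding K_def using d0 by simp
    have low: "I2 mu lam x - K*(x-mu)^2 \<ge> 0" if x: "0 < x" "x < 1" for x
    proof -
      let ?h = "\<lambda>x. I2 mu lam x - K*(x-mu)^2"
      let ?h1 = "\<lambda>x. TT mu lam x - 2*K*(x-mu)"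
      let ?h2 = "\<lambda>x. RR mu lam x - 2*K"
      have D1: "\<And>t. 0 < t \<Longrightarrow> t < 1 \<Longrightarrow> (?h has_real_derivative ?h1 t) (at t)" using dh by blast
      have D2: "\<And>t. 0 < t \<Longrightarrow> t < 1 \<Longrightarrow> (?h1 has_real_derivative ?h2 t) (at t)" using dh1 by blast
      have Z: "?h mu = 0" "?h1 mu = 0" "?h (1-mu) = 0" "?h1 (1-mu) = 0"
      proof -
        show "?h mu = 0" "?h1 mu = 0" using V by auto
        have "K*((1-mu)-mu)^2 = (K*(1-2*mu))*(1-2*mu)" by (simp add: power2_eq_square algebra_simps)
        then have q1: "K*((1-mu)-mu)^2 = L*(1-2*mu)" using KL by simp
        have q2: "I2 mu lam (1-mu) = (1-2*mu)*L" using V(3) unfolding L_def .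
        show "?h (1-mu) = 0" using q1 q2 by simp
        have "2*K*((1-mu)-mu) = 2*(K*(1-2*mu))" by (simp add: algebra_simps)
        then have q3: "2*K*((1-mu)-mu) = 2*L" using KL by simp
        have q4: "TT mu lam (1-mu) = 2*L" using V(4) unfolding L_def .
        show "?h1 (1-mu) = 0" using q3 q4 by simp
      qed
      have M: "\<And>p q. 0 < p \<Longrightarrow> p < 1 \<Longrightarrow> 0 < q \<Longrightarrow> q < 1 \<Longrightarrow> p*(1-p) \<le> q*(1-q) \<Longrightarrow> ?h2 q \<le> ?h2 p"
        using RR_mono[OF assms] by simp
      have SM: "\<And>p q. 0 < p \<Longrightarrow> p < 1 \<Longrightarrow> 0 < q \<Longrightarrow> q < 1 \<Longrightarrow> p*(1-p) < q*(1-q) \<Longrightarrow> ?h2 q < ?h2 p"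
        using RR_smono[OF assms] by simp
      show ?thesis
      proof (cases "mu < 1/2")
        case True
        show ?thesis
          by (rule key[of mu "1-mu" ?h ?h1 ?h2, OF _ _ _ _ D1 D2 Z(1) Z(3) Z(2) Z(4) M SM x])
             (use True assms in auto)
      next
        case F2: False
        then have "1 - mu < mu" using False by simp
        show ?thesis
          by (rule key[of "1-mu" mu ?h ?h1 ?h2, OF _ _ _ _ D1 D2 Z(3) Z(1) Z(4) Z(2) M SM x])
             (use F2 False assms in auto)
      qed
    qed
    have Kc: "K \<ge> 2*c"
    proof -
      define z where "z = c*(1-2*mu)"
      have c0: "0 < c" "c \<le> 1" unfolding c_def using assms by auto
      have AB: "BB mu lam = (1+lam)/2*(1+z)" "AA mu lam = (1+lam)/2*(1-z)"
        unfolding AA_def[OF assms] BB_def[OF assms] z_def c_def using assms by (simp_all add: field_simps)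
      have zb: "\<bar>z\<bar> < 1"
      proof -
        have "\<bar>1-2*mu\<bar> < 1" using assms by auto
        then have "\<bar>z\<bar> < 1 * 1" unfolding z_def abs_mult using c0
          by (intro mult_le_less_imp_less) auto
        then show ?thesis by simp
      qed
      have q: "(1+lam)/2 > 0" using assms by simp
      have Lz: "L = ln (1+z) - ln (1-z)"
      proof -
        have "1 + z > 0" "1 - z > 0" using zb by auto
        then have "ln ((1+lam)/2*(1+z)) = ln ((1+lam)/2) + ln (1+z)"
          "ln ((1+lam)/2*(1-z)) = ln ((1+lam)/2) + ln (1-z)"
          using q ln_mult[of "(1+lam)/2" "1+z"] ln_mult[of "(1+lam)/2" "1-z"] by auto
        then show ?thesis unfolding L_def AB by simp
      qed
      show ?thesis
      proof (cases "mu < 1/2")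
        case True
        then have "z \<ge> 0" unfolding z_def using c0 by simp
        then have "L \<ge> 2*z" using ln_artanh[of z] zb Lz by simp
        then show ?thesis unfolding K_def z_def using True by (simp add: pos_le_divide_eq)
      next
        case F2: False
        then have dneg: "1 - 2*mu < 0" using False by simp
        then have "-z \<ge> 0" unfolding z_def using c0 mult_pos_neg[of c "1 - 2*mu"] by simp
        then have "ln (1+(-z)) - ln (1-(-z)) \<ge> 2*(-z)" using ln_artanh[of "-z"] zb by simp
        then have "L \<le> 2*z" using Lz by simp
        then show ?thesis unfolding K_def z_def using dneg by (simp add: neg_le_divide_eq)
      qed
    qed
    show ?thesis
    proof (intro conjI allI impI)
      fix x :: real assume x: "0 < x \<and> x < 1"
      have "2*c*(x-mu)^2 \<le> K*(x-mu)^2" using Kc by (intro mult_right_mono) auto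
      then show "I_theta mu lam x \<ge> 2 * ((1 - lam) / (1 + lam)) * (x - mu)^2"
        using low[of x] Ieq[of x] x unfolding c_def by simp
    next
      fix x :: real assume "mu \<noteq> 1/2" and x: "0 < x \<and> x < 1 \<and> x \<noteq> mu"
      have l: "I_theta mu lam (1 - mu) / ((1 - mu) - mu)^2 = K"
      proof -
        have "I_theta mu lam (1 - mu) = (1-2*mu)*L" using Ieq[of "1-mu"] V assms unfolding L_def by simp
        moreover have "((1 - mu) - mu)^2 = (1-2*mu)*(1-2*mu)" by (simp add: power2_eq_square)
        ultimately show ?thesis unfolding K_def using d0 by simp
      qed
      have p: "(x-mu)^2 > 0" using x by simp
      have "K*(x-mu)^2 \<le> I_theta mu lam x" using low[of x] Ieq[of x] x by simp
      then show "I_theta mu lam (1 - mu) / ((1 - mu) - mu)^2 \<le> I_theta mu lam x / (x - mu)^2"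
        unfolding l using p by (simp add: pos_le_divide_eq)
    qed
  qed
qed

end
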